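(* Suppose the standing assumptions (1)–(5) below hold, and that $m$ nodes, possibly lying in different training graphs, request entire node removal at the same time, where $m<\min_i g_i$. That is, the updated dataset is $\mathcal{D}'=(\mathbf{Z}',\mathbf{y})$ where for each affected graph $\mathcal{G}_i$, $\mathbf{z}_i'=\Phi(\mathbf{S}_i',\mathbf{x}_i')$ with $\mathbf{x}_i'$ obtained from $\mathbf{x}_i$ by zeroing the entries of the removed nodes of $\mathcal{G}_i$ and $\mathbf{S}_i'$ obtained from $\mathbf{S}_i$ by zeroing the rows and columns of those nodes, and $\mathbf{z}_i'=\mathbf{z}_i$ for unaffected graphs. Then the updated model $\mathbf{w}'=\mathbf{w}^\star+\mathbf{H}_{\mathbf{w}^\star}^{-1}\Delta$ satisfies $$\|\nabla L(\mathbf{w}',\mathcal{D}')\|\leq\frac{4\gamma_2 m^2C_1^2F^3}{\lambda^2 n},\qquad F=\sqrt{\sum_{l=0}^{L-1}B^{2l}},$$ where $B$ is the upper frame constant of the graph wavelets used in the GST.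
   Context: Setting (graph classification). There are $n$ training graphs $\mathcal{G}_1,\dots,\mathcal{G}_n$. Graph $\mathcal{G}_i$ has $g_i$ nodes, a symmetric adjacency matrix $\mathbf{S}_i\in\mathbb{R}^{g_i\times g_i}$ (the graph shift operator), a node signal $\mathbf{x}_i\in\mathbb{R}^{g_i}$ (one scalar feature per node) and a label $y_i$. Graph scattering transform (GST). Fix positive integers $J,L$ and wavelet kernel functions $h_1,\dots,h_J:\mathbb{R}\to\mathbb{R}$. For a symmetric $\mathbf{S}=\mathbf{V}\mathbf{\Lambda}\mathbf{V}^T$ with eigenvalues $\lambda_1,\dots,\lambda_g$, set $\mathbf{H}_j(\mathbf{S})=\mathbf{V}\,\mathrm{diag}(h_j(\lambda_1),\dots,h_j(\lambda_g))\mathbf{V}^T$. The wavelets form a frame: there are constants $0<A\le B$ with $A^2\|\mathbf{x}\|^2\le\sum_{j=1}^J\|\mathbf{H}_j(\mathbf{S})\mathbf{x}\|^2\le B^2\|\mathbf{x}\|^2$ for all $\mathbf{x}$ (for all shift operators considered). Let $\rho$ be the entrywise absolute value. For a path $p=(j_1,\dots,j_l)$ with $j_k\in\{1,\dots,J\}$ and $0\le l\le L-1$, define $\Phi_{()}(\mathbf{S},\mathbf{x})=\mathbf{x}$ and $\Phi_{(j_1,\dots,j_l)}(\mathbf{S},\mathbf{x})=\rho\big(\mathbf{H}_{j_l}(\mathbf{S})\Phi_{(j_1,\dots,j_{l-1})}(\mathbf{S},\mathbf{x})\big)$, and the scalar coefficient $\phi_p(\mathbf{S},\mathbf{x})=U\Phi_p(\mathbf{S},\mathbf{x})$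 with the averaging operator $U=\frac{1}{g}\mathbf{1}^T$ ($g$ the number of nodes). The embedding $\Phi(\mathbf{S},\mathbf{x})\in\mathbb{R}^d$, $d=\sum_{l=0}^{L-1}J^l$, is the concatenation of all $\phi_p(\mathbf{S},\mathbf{x})$. Set $\mathbf{z}_i=\Phi(\mathbf{S}_i,\mathbf{x}_i)$, let $\mathbf{Z}$ have rows $\mathbf{z}_i^T$, and $\mathcal{D}=(\mathbf{Z},\mathbf{y})$. Learning and update. $\ell(s,y)$ is convex and twice differentiable in $s$; $\ell'$, $\ell''$ denote derivatives in $s$, and $\nabla$, $\nabla^2$ denote gradient/Hessian in $\mathbf{w}$. For a dataset $\mathcal{D}=(\mathbf{Z},\mathbf{y})$, $L(\mathbf{w},\mathcal{D})=\sum_{i=1}^n\big(\ell(\mathbf{w}^T\mathbf{z}_i,y_i)+\frac{\lambda}{2}\|\mathbf{w}\|^2\big)$ with $\lambda>0$, and $\mathbf{w}^\star=\arg\min_{\mathbf{w}}L(\mathbf{w},\mathcal{D})$. For the updated dataset $\mathcal{D}'$, set $\mathbf{H}_{\mathbf{w}^\star}=\nabla^2L(\mathbf{w}^\star,\mathcal{D}')$ and $\Delta=\nabla L(\mathbf{w}^\star,\mathcal{D})-\nabla L(\mathbf{w}^\star,\mathcal{D}')$. Norms are $\ell_2$ for vectors and operator norm for matrices. Standing assumptions: there are constants $C_1,C_2,\gamma_1,\gamma_2$ such that for every embedding $\mathbf{z}_i$ (of $\mathcal{D}$ or $\mathcal{D}'$) and every $\mathbf{w}\in\mathbb{R}^d$: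 (1) $\|\nabla\ell(\mathbf{w}^T\mathbf{z}_i,y_i)\|\le C_1$; (2) $|\ell'(\mathbf{w}^T\mathbf{z}_i,y_i)|\le C_2$; (3) $\ell'$ is $\gamma_1$-Lipschitz; (4) $\ell''$ is $\gamma_2$-Lipschitz; (5) the signals satisfy $|[\mathbf{x}_i]_j|\le1$ for all $i$ and all $j\in\{1,\dots,g_i\}$. *)

theory Defs
  imports "HOL-Analysis.Convex" "Jordan_Normal_Form.Matrix"
begin

definition diag_of :: "nat \<Rightarrow> (nat \<Rightarrow> real) \<Rightarrow> real mat" where
  "diag_of k f = mat k k (\<lambda>(a,b). if a = b then f a else 0)"

definition mat_fun :: "(real \<Rightarrow> real) \<Rightarrow> real mat \<Rightarrow> real mat" where
  "mat_fun h S = (THE M. \<exists>V lam. V \<in> carrier_mat (dim_row S) (dim_row S)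
      \<and> V * transpose_mat V = 1\<^sub>m (dim_row S)
      \<and> S = V * diag_of (dim_row S) lam * transpose_mat V
      \<and> M = V * diag_of (dim_row S) (\<lambda>a. h (lam a)) * transpose_mat V)"

definition vnorm :: "real vec \<Rightarrow> real" where
  "vnorm v = sqrt (scalar_prod v v)"

definition gst_node :: "(nat \<Rightarrow> real \<Rightarrow> real) \<Rightarrow> real mat \<Rightarrow> real vec \<Rightarrow> nat list \<Rightarrow> real vec" where
  "gst_node h S x p = foldl (\<lambda>v j. map_vec abs (mat_fun (h j) S *\<^sub>v v)) x p"

definition gst_coef :: "(nat \<Rightarrow> real \<Rightarrow> real) \<Rightarrow> real mat \<Rightarrow> real vec \<Rightarrow> nat list \<Rightarrow> real" where
  "gst_coef h S x p = (1 / real (dim_vec x)) * (\<Sum>a<dim_vec x. gst_node h S x p $ a)"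

definition gst_paths :: "nat \<Rightarrow> nat \<Rightarrow> nat list list" where
  "gst_paths J L = concat (map (\<lambda>l. List.n_lists l [1..<J+1]) [0..<L])"

definition gst_dim :: "nat \<Rightarrow> nat \<Rightarrow> nat" where
  "gst_dim J L = (\<Sum>l<L. J ^ l)"

definition gst :: "nat \<Rightarrow> nat \<Rightarrow> (nat \<Rightarrow> real \<Rightarrow> real) \<Rightarrow> real mat \<Rightarrow> real vec \<Rightarrow> real vec" where
  "gst J L h S x = vec_of_list (map (gst_coef h S x) (gst_paths J L))"

definition remove_signal :: "nat set \<Rightarrow> real vec \<Rightarrow> real vec" where
  "remove_signal R x = vec (dim_vec x) (\<lambda>a. if a \<in> R then 0 else x $ a)"

definition remove_shift :: "nat set \<Rightarrow> real mat \<Rightarrow> real mat" where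
  "remove_shift R S = mat (dim_row S) (dim_col S)
      (\<lambda>(a,b). if a \<in> R \<or> b \<in> R then 0 else S $$ (a,b))"

definition risk :: "(real \<Rightarrow> 'y \<Rightarrow> real) \<Rightarrow> real \<Rightarrow> nat \<Rightarrow> (nat \<Rightarrow> real vec) \<Rightarrow> (nat \<Rightarrow> 'y)
   \<Rightarrow> real vec \<Rightarrow> real" where
  "risk ls lam n z y w = (\<Sum>i<n. ls (scalar_prod w (z i)) (y i) + lam / 2 * (vnorm w)\<^sup>2)"

definition risk_grad :: "(real \<Rightarrow> 'y \<Rightarrow> real) \<Rightarrow> real \<Rightarrow> nat \<Rightarrow> nat \<Rightarrow> (nat \<Rightarrow> real vec)
   \<Rightarrow> (nat \<Rightarrow> 'y) \<Rightarrow> real vec \<Rightarrow> real vec" where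
  "risk_grad ls' lam d n z y w =
     vec d (\<lambda>a. \<Sum>i<n. ls' (scalar_prod w (z i)) (y i) * (z i $ a) + lam * (w $ a))"

definition risk_hess :: "(real \<Rightarrow> 'y \<Rightarrow> real) \<Rightarrow> real \<Rightarrow> nat \<Rightarrow> nat \<Rightarrow> (nat \<Rightarrow> real vec)
   \<Rightarrow> (nat \<Rightarrow> 'y) \<Rightarrow> real vec \<Rightarrow> real mat" where
  "risk_hess ls'' lam d n z y w =
     mat d d (\<lambda>(a,b). \<Sum>i<n. ls'' (scalar_prod w (z i)) (y i) * (z i $ a) * (z i $ b)
                         + (if a = b then lam else 0))"

definition mat_inv :: "nat \<Rightarrow> real mat \<Rightarrow> real mat" where
  "mat_inv d H = (THE B. B \<in> carrier_mat d d \<and> H * B = 1\<^sub>m d \<and> B * H = 1\<^sub>m d)"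

end

theory Submission
  imports Defs "Jordan_Normal_Form.Schur_Decomposition" "HOL-Computational_Algebra.Fundamental_Theorem_Algebra" "HOL-Analysis.L2_Norm"
begin

lemma real_sym_eigen:
  fixes A :: "real mat"
  assumes A: "A \<in> carrier_mat n n" and sym: "transpose_mat A = A" and n: "n > 0"
  shows "\<exists>e v. v \<in> carrier_vec n \<and> v \<noteq> 0\<^sub>v n \<and> A *\<^sub>v v = e \<cdot>\<^sub>v v"
proof -
  let ?Ac = "map_mat complex_of_real A"
  have Ac: "?Ac \<in> carrier_mat n n" using A by simp
  have "degree (char_poly ?Ac) = n" using degree_monic_char_poly[OF Ac] by simp
  hence "\<not> constant (poly (char_poly ?Ac))" using n by (simp add: constant_degree)
  then obtain e where "poly (char_poly ?Ac) e = 0" using fundamental_theorem_of_algebra by blast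
  hence "eigenvalue ?Ac e" using eigenvalue_root_char_poly[OF Ac] by simp
  then obtain u where ev: "eigenvector ?Ac u e" unfolding eigenvalue_def by blast
  hence u: "u \<in> carrier_vec n" "u \<noteq> 0\<^sub>v n" "?Ac *\<^sub>v u = e \<cdot>\<^sub>v u"
    unfolding eigenvector_def using Ac by auto
  have eq: "(\<Sum>b<n. complex_of_real (A $$ (a,b)) * u $ b) = e * u $ a" if "a < n" for a
  proof -
    have "(?Ac *\<^sub>v u) $ a = (e \<cdot>\<^sub>v u) $ a" using u(3) by simp
    thus ?thesis using that A u(1) by (simp add: scalar_prod_def atLeast0LessThan)
  qed
  define r where "r a = Re (u $ a)" for a
  define s where "s a = Im (u $ a)" for a
  have er: "(\<Sum>b<n. A $$ (a,b) * r b) = Re e * r a - Im e * s a" if "a<n" for a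
    using arg_cong[OF eq[OF that], of Re] by (simp add: r_def s_def Re_sum)
  have es: "(\<Sum>b<n. A $$ (a,b) * s b) = Re e * s a + Im e * r a" if "a<n" for a
    using arg_cong[OF eq[OF that], of Im] by (simp add: r_def s_def Im_sum)
  have symm: "A $$ (a,b) = A $$ (b,a)" if "a<n" "b<n" for a b
    using arg_cong[OF sym, of "\<lambda>M. M $$ (b,a)"] that A by auto
  have swap: "(\<Sum>a<n. s a * (\<Sum>b<n. A $$ (a,b) * r b)) = (\<Sum>a<n. r a * (\<Sum>b<n. A $$ (a,b) * s b))"
  proof -
    have "(\<Sum>a<n. s a * (\<Sum>b<n. A $$ (a,b) * r b)) = (\<Sum>a<n. \<Sum>b<n. s a * A $$ (a,b) * r b)"
      by (simp add: sum_distrib_left mult.assoc)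
    also have "\<dots> = (\<Sum>b<n. \<Sum>a<n. s a * A $$ (a,b) * r b)" by (rule sum.swap)
    also have "\<dots> = (\<Sum>b<n. \<Sum>a<n. r b * A $$ (b,a) * s a)"
    proof (intro sum.cong refl)
      fix b a assume "b \<in> {..<n}" "a \<in> {..<n}"
      thus "s a * A $$ (a,b) * r b = r b * A $$ (b,a) * s a" using symm[of a b] by simp
    qed
    also have "\<dots> = (\<Sum>a<n. r a * (\<Sum>b<n. A $$ (a,b) * s b))"
      by (simp add: sum_distrib_left mult.assoc)
    finally show ?thesis .
  qed
  have l1: "(\<Sum>a<n. s a * (\<Sum>b<n. A $$ (a,b) * r b)) = (\<Sum>a<n. s a * (Re e * r a - Im e * s a))"
    by (intro sum.cong refl) (simp add: er)
  have l2: "(\<Sum>a<n. r a * (\<Sum>b<n. A $$ (a,b) * s b)) = (\<Sum>a<n. r a * (Re e * s a + Im e * r a))"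
    by (intro sum.cong refl) (simp add: es)
  have l3: "(\<Sum>a<n. r a * (Re e * s a + Im e * r a)) - (\<Sum>a<n. s a * (Re e * r a - Im e * s a))
      = Im e * (\<Sum>a<n. (r a)^2 + (s a)^2)"
  proof -
    have "(\<Sum>a<n. r a * (Re e * s a + Im e * r a)) - (\<Sum>a<n. s a * (Re e * r a - Im e * s a))
      = (\<Sum>a<n. r a * (Re e * s a + Im e * r a) - s a * (Re e * r a - Im e * s a))"
      by (simp add: sum_subtractf)
    also have "\<dots> = (\<Sum>a<n. Im e * ((r a)^2 + (s a)^2))"
      by (intro sum.cong refl) (simp add: algebra_simps power2_eq_square)
    also have "\<dots> = Im e * (\<Sum>a<n. (r a)^2 + (s a)^2)" by (rule sum_distrib_left[symmetric])
    finally show ?thesis .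
  qed
  have zero: "Im e * (\<Sum>a<n. (r a)^2 + (s a)^2) = 0" using l1 l2 l3 swap by simp
  obtain a0 where a0: "a0 < n" "u $ a0 \<noteq> 0"
    using u(1,2) by (metis carrier_vecD eq_vecI index_zero_vec(1) index_zero_vec(2))
  hence rs0: "r a0 \<noteq> 0 \<or> s a0 \<noteq> 0" by (simp add: r_def s_def complex_eq_iff)
  have "(\<Sum>a<n. (r a)^2 + (s a)^2) > 0"
    by (rule sum_pos2[of _ a0]) (use a0 rs0 in \<open>auto simp: sum_power2_gt_zero_iff\<close>)
  hence Im0: "Im e = 0" using zero by simp
  have mk: "\<exists>e v. v \<in> carrier_vec n \<and> v \<noteq> 0\<^sub>v n \<and> A *\<^sub>v v = e \<cdot>\<^sub>v v"
    if h1: "\<And>a. a<n \<Longrightarrow> (\<Sum>b<n. A$$(a,b) * w b) = c * w a" and h2: "w a0 \<noteq> 0" for w c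
  proof (intro exI conjI)
    show "vec n w \<in> carrier_vec n" by simp
    show "vec n w \<noteq> 0\<^sub>v n" using h2 a0 by (metis index_vec index_zero_vec(1))
    show "A *\<^sub>v vec n w = c \<cdot>\<^sub>v vec n w"
      by (rule eq_vecI) (use A h1 in \<open>auto simp: scalar_prod_def atLeast0LessThan\<close>)
  qed
  show ?thesis
  proof (cases "r a0 = 0")
    case False
    show ?thesis by (rule mk[of r "Re e"]) (use er Im0 False in auto)
  next
    case True
    hence "s a0 \<noteq> 0" using rs0 by simp
    show ?thesis by (rule mk[of s "Re e"]) (use es Im0 \<open>s a0 \<noteq> 0\<close> in auto)
  qed
qed

lemma real_cscalar: "(v::real vec) \<bullet>c w = v \<bullet> w"
proof -
  have "conjugate w = w" by (rule eq_vecI) simp_all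
  thus ?thesis by simp
qed

lemma real_sprod_self_pos: "(r::real vec) \<in> carrier_vec n \<Longrightarrow> r \<noteq> 0\<^sub>v n \<Longrightarrow> r \<bullet> r > 0"
proof -
  assume r: "r \<in> carrier_vec n" "r \<noteq> 0\<^sub>v n"
  obtain a where a: "a < n" "r $ a \<noteq> 0"
    using r by (metis carrier_vecD eq_vecI index_zero_vec(1) index_zero_vec(2))
  show "r \<bullet> r > 0" unfolding scalar_prod_def
    by (rule sum_pos2[of _ a]) (use a r in auto)
qed

lemma real_sprod_self_nonneg: "(r::real vec) \<bullet> r \<ge> 0"
  unfolding scalar_prod_def by (rule sum_nonneg) auto

lemma orth_complete:
  fixes v :: "real vec"
  assumes v: "v \<in> carrier_vec n" and v1: "v \<bullet> v = 1"
  shows "\<exists>U. U \<in> carrier_mat n n \<and> transpose_mat U * U = 1\<^sub>m n \<and> U * transpose_mat U = 1\<^sub>m n \<and> col U 0 = v"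
proof -
  have v0: "v \<noteq> 0\<^sub>v n" using v1 v by auto
  interpret cof_vec_space n "TYPE(real)" .
  define b where "b = basis_completion v"
  from basis_completion[OF v v0, folded b_def]
  have b: "set b \<subseteq> carrier_vec n" "distinct b" "\<not> lin_dep (set b)" "length b = n" "hd b = v" by auto
  have n0: "n \<noteq> 0" using v v0 by auto
  then obtain vs where bv: "b = v # vs" using b(4,5) by (cases b) auto
  define ws where "ws = gram_schmidt n b"
  from gram_schmidt_result[OF b(1) b(2) b(3) ws_def]
  have ws: "corthogonal ws" "set ws \<subseteq> carrier_vec n" "length ws = n" using b(4) by auto
  have hd: "hd ws = v" unfolding ws_def bv using gram_schmidt_hd[OF v] by simp
  have ws_car: "ws ! i \<in> carrier_vec n" if "i < n" for i using ws that by auto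
  have orth: "(ws!i \<bullet> ws!j = 0) = (i \<noteq> j)" if "i<n" "j<n" for i j
    using corthogonalD[OF ws(1), of i j] ws(3) that by (simp add: real_cscalar)
  have wpos: "ws!i \<bullet> ws!i > 0" if "i<n" for i
    using orth[OF that that] real_sprod_self_nonneg[of "ws!i"] by linarith
  define us where "us = map (\<lambda>w. (1 / sqrt (w \<bullet> w)) \<cdot>\<^sub>v w) ws"
  define U where "U = mat_of_cols n us"
  have us_len: "length us = n" using ws by (simp add: us_def)
  have us_nth: "us ! i = (1 / sqrt (ws!i \<bullet> ws!i)) \<cdot>\<^sub>v ws!i" if "i < n" for i
    using that ws by (simp add: us_def)
  have us_car: "us ! i \<in> carrier_vec n" if "i<n" for i using us_nth[OF that] ws_car[OF that] by simp
  have dot: "us!i \<bullet> us!j = (if i = j then 1 else 0)" if "i<n" "j<n" for i j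
  proof -
    have "us!i \<bullet> us!j = (1 / sqrt (ws!i \<bullet> ws!i)) * (1 / sqrt (ws!j \<bullet> ws!j)) * (ws!i \<bullet> ws!j)"
      unfolding us_nth[OF that(1)] us_nth[OF that(2)]
      using ws_car[OF that(1)] ws_car[OF that(2)]
      by (simp add: smult_scalar_prod_distrib scalar_prod_smult_distrib)
    also have "\<dots> = (if i = j then 1 else 0)"
    proof (cases "i = j")
      case True
      have p: "ws!i \<bullet> ws!i > 0" using wpos that by auto
      hence "sqrt (ws!i \<bullet> ws!i) * sqrt (ws!i \<bullet> ws!i) = ws!i \<bullet> ws!i"
        using p by simp
      then show ?thesis using True p by (simp add: field_simps)
    next
      case False
      then show ?thesis using orth[OF that] by simp
    qed
    finally show ?thesis .
  qed
  have U: "U \<in> carrier_mat n n" unfolding U_def using mat_of_cols_carrier(1)[of n us] us_len by simp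
  have colU: "col U i = us ! i" if "i<n" for i
    unfolding U_def using us_len us_car that by simp
  have UtU: "transpose_mat U * U = 1\<^sub>m n"
  proof (rule eq_matI)
    fix i j assume ij: "i < dim_row (1\<^sub>m n)" "j < dim_col (1\<^sub>m n)"
    hence "i < n" "j < n" by auto
    thus "(transpose_mat U * U) $$ (i,j) = 1\<^sub>m n $$ (i,j)" using U by (simp add: colU dot)
  qed (use U in auto)
  have UUt: "U * transpose_mat U = 1\<^sub>m n"
    using mat_mult_left_right_inverse[OF _ U UtU] U by simp
  have "ws ! 0 = v" using hd ws(3) n0 hd_conv_nth[of ws] by fastforce
  hence "col U 0 = v" using colU[of 0] n0 us_nth[of 0] v1 v by simp
  thus ?thesis using U UtU UUt by blast
qed

lemma spectral:
  fixes A :: "real mat"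
  assumes "A \<in> carrier_mat n n" "transpose_mat A = A"
  shows "\<exists>V D. V \<in> carrier_mat n n \<and> D \<in> carrier_mat n n \<and> V * transpose_mat V = 1\<^sub>m n
     \<and> diagonal_mat D \<and> A = V * D * transpose_mat V"
  using assms
proof (induction n arbitrary: A)
  case 0
  show ?case
    by (rule exI[of _ "1\<^sub>m 0"], rule exI[of _ "0\<^sub>m 0 0"]) (use 0 in \<open>auto simp: diagonal_mat_def intro!: eq_matI\<close>)
next
  case (Suc k A)
  define n where "n = Suc k"
  have A: "A \<in> carrier_mat n n" and sym: "transpose_mat A = A" using Suc.prems n_def by auto
  obtain e r where r: "r \<in> carrier_vec n" "r \<noteq> 0\<^sub>v n" "A *\<^sub>v r = e \<cdot>\<^sub>v r"
    using real_sym_eigen[OF A sym] n_def by auto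
  have rr: "r \<bullet> r > 0" using real_sprod_self_pos[OF r(1,2)] .
  define v where "v = (1 / sqrt (r \<bullet> r)) \<cdot>\<^sub>v r"
  have v: "v \<in> carrier_vec n" using r by (simp add: v_def)
  have "v \<bullet> v = (1 / sqrt (r \<bullet> r)) * (1 / sqrt (r \<bullet> r)) * (r \<bullet> r)"
    unfolding v_def using r(1) by (simp add: smult_scalar_prod_distrib scalar_prod_smult_distrib)
  also have "\<dots> = 1"
  proof -
    have "sqrt (r \<bullet> r) * sqrt (r \<bullet> r) = r \<bullet> r" using rr by simp
    thus ?thesis using rr by (simp add: field_simps)
  qed
  finally have v1: "v \<bullet> v = 1" .
  have Av: "A *\<^sub>v v = e \<cdot>\<^sub>v v"
    unfolding v_def using A r by (simp add: mult_mat_vec smult_smult_assoc mult.commute)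
  obtain U where U: "U \<in> carrier_mat n n" "transpose_mat U * U = 1\<^sub>m n" "U * transpose_mat U = 1\<^sub>m n" "col U 0 = v"
    using orth_complete[OF v v1] by blast
  have Ut: "transpose_mat U \<in> carrier_mat n n" using U by simp
  define A' where "A' = transpose_mat U * (A * U)"
  have A': "A' \<in> carrier_mat n n" using U A by (simp add: A'_def)
  have A'sym: "transpose_mat A' = A'"
  proof -
    have "transpose_mat A' = transpose_mat (A * U) * U"
      unfolding A'_def using transpose_mult[OF Ut, of "A * U" n] U A by simp
    also have "\<dots> = (transpose_mat U * A) * U"
      using transpose_mult[OF A U(1)] sym by simp
    also have "\<dots> = A'" unfolding A'_def using U A by (simp add: assoc_mult_mat[of _ n n _ n _ n])
    finally show ?thesis .
  qed
  have n0: "0 < n" using n_def by simp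
  have col0: "A' $$ (i, 0) = (if i = 0 then e else 0)" if i: "i < n" for i
  proof -
    have "A' $$ (i,0) = row (transpose_mat U) i \<bullet> col (A * U) 0"
      unfolding A'_def using U A i n0 by simp
    also have "col (A * U) 0 = A *\<^sub>v col U 0" using A U n0 by simp
    also have "\<dots> = e \<cdot>\<^sub>v col U 0" using Av U by simp
    also have "row (transpose_mat U) i \<bullet> (e \<cdot>\<^sub>v col U 0) = e * (row (transpose_mat U) i \<bullet> col U 0)"
      using U i n0 v by (simp add: scalar_prod_smult_distrib)
    also have "row (transpose_mat U) i \<bullet> col U 0 = (if i = 0 then 1 else 0)"
    proof -
      have "(transpose_mat U * U) $$ (i, 0) = row (transpose_mat U) i \<bullet> col U 0"
        using U i n0 by (subst index_mult_mat) auto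
      moreover have "(transpose_mat U * U) $$ (i, 0) = (if i = 0 then 1 else 0)"
        using U(2) i n0 by simp
      ultimately show ?thesis by simp
    qed
    finally show ?thesis by simp
  qed
  have symA': "A' $$ (i,j) = A' $$ (j,i)" if "i < n" "j < n" for i j
    using arg_cong[OF A'sym, of "\<lambda>M. M $$ (j,i)"] that A' by auto
  have row0: "A' $$ (0, j) = (if j = 0 then e else 0)" if j: "j < n" for j
    using symA'[OF n0 j] col0[OF j] by simp
  define A3 where "A3 = mat k k (\<lambda>(i,j). A' $$ (Suc i, Suc j))"
  have A3: "A3 \<in> carrier_mat k k" by (simp add: A3_def)
  have A3sym: "transpose_mat A3 = A3"
    by (rule eq_matI) (use symA' in \<open>auto simp: A3_def n_def\<close>)
  obtain V3 D3 where V3: "V3 \<in> carrier_mat k k" "D3 \<in> carrier_mat k k" "V3 * transpose_mat V3 = 1\<^sub>m k"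
     "diagonal_mat D3" "A3 = V3 * D3 * transpose_mat V3"
    using Suc.IH[OF A3 A3sym] by blast
  define E where "E = mat 1 1 (\<lambda>_. e)"
  have E: "E \<in> carrier_mat 1 1" by (simp add: E_def)
  have A'blk: "A' = four_block_mat E (0\<^sub>m 1 k) (0\<^sub>m k 1) A3"
  proof (rule eq_matI)
    fix i j assume "i < dim_row (four_block_mat E (0\<^sub>m 1 k) (0\<^sub>m k 1) A3)"
      "j < dim_col (four_block_mat E (0\<^sub>m 1 k) (0\<^sub>m k 1) A3)"
    hence ij: "i < n" "j < n" using E A3 by (auto simp: n_def)
    show "A' $$ (i, j) = four_block_mat E (0\<^sub>m 1 k) (0\<^sub>m k 1) A3 $$ (i, j)"
    proof (cases "i = 0")
      case True
      thus ?thesis using ij row0 E A3 by (simp add: E_def n_def)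
    next
      case False
      show ?thesis
      proof (cases "j = 0")
        case True
        thus ?thesis using ij col0 E A3 False by (simp add: E_def n_def)
      next
        case False2: False
        obtain i' j' where "i = Suc i'" "j = Suc j'" using False False2 by (metis not0_implies_Suc)
        thus ?thesis using ij E A3 by (simp add: A3_def n_def)
      qed
    qed
  qed (use A' E A3 n_def in auto)
  define V' where "V' = four_block_mat (1\<^sub>m 1) (0\<^sub>m 1 k) (0\<^sub>m k 1) V3"
  define D' where "D' = four_block_mat E (0\<^sub>m 1 k) (0\<^sub>m k 1) D3"
  have V': "V' \<in> carrier_mat n n" using four_block_carrier_mat[of "1\<^sub>m 1" 1 1 V3 k k] V3 by (simp add: V'_def n_def)
  have D': "D' \<in> carrier_mat n n" using four_block_carrier_mat[OF E V3(2)] by (simp add: D'_def n_def)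
  have V'T: "transpose_mat V' = four_block_mat (1\<^sub>m 1) (0\<^sub>m 1 k) (0\<^sub>m k 1) (transpose_mat V3)"
    unfolding V'_def using V3 by (subst transpose_four_block_mat) auto
  have V'V'T: "V' * transpose_mat V' = 1\<^sub>m n"
    unfolding V'T unfolding V'_def using V3
    by (subst mult_four_block_mat[of _ 1 1 _ k _ k]) (auto simp: n_def)
  have VD: "V' * D' = four_block_mat E (0\<^sub>m 1 k) (0\<^sub>m k 1) (V3 * D3)"
    unfolding V'_def D'_def using V3 E
    by (subst mult_four_block_mat[of _ 1 1 _ k _ k]) auto
  have A'eq: "A' = V' * D' * transpose_mat V'"
    unfolding VD V'T A'blk V3(5) using V3 E
    by (subst mult_four_block_mat[of _ 1 1 _ k _ k]) auto
  have D'diag: "diagonal_mat D'"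
    unfolding diagonal_mat_def D'_def using V3(2,4) E
    by (auto simp: diagonal_mat_def E_def)
  have UUtX: "U * (transpose_mat U * X) = X" if "X \<in> carrier_mat n n" for X
  proof -
    have "U * (transpose_mat U * X) = (U * transpose_mat U) * X"
      by (rule assoc_mult_mat[OF U(1) Ut that, symmetric])
    thus ?thesis using U(3) that by simp
  qed
  have AUA: "A = U * A' * transpose_mat U"
    unfolding A'_def using U A Ut by (simp add: assoc_mult_mat[of _ n n _ n _ n] UUtX)
  define V where "V = U * V'"
  have V: "V \<in> carrier_mat n n" using U V' by (simp add: V_def)
  have VT: "transpose_mat V = transpose_mat V' * transpose_mat U"
    unfolding V_def using transpose_mult[OF U(1) V'] .
  have VVT: "V * transpose_mat V = 1\<^sub>m n"
  proof -
    have "V * transpose_mat V = U * (V' * transpose_mat V') * transpose_mat U"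
      unfolding V_def transpose_mult[OF U(1) V'] using U V' Ut by (simp add: assoc_mult_mat[of _ n n _ n _ n])
    thus ?thesis using V'V'T U by simp
  qed
  have "A = V * D' * transpose_mat V"
  proof -
    have "V * D' * transpose_mat V = U * (V' * D' * transpose_mat V') * transpose_mat U"
      unfolding V_def transpose_mult[OF U(1) V'] using U V' Ut D' by (simp add: assoc_mult_mat[of _ n n _ n _ n])
    thus ?thesis using AUA A'eq by simp
  qed
  thus ?case using V D' VVT D'diag n_def by blast
qed

lemma diag_of_carrier[simp]: "diag_of n f \<in> carrier_mat n n"
  by (simp add: diag_of_def)

lemma mult_diag_right:
  assumes M: "M \<in> carrier_mat n n" and a: "a < n" and b: "b < n"
  shows "(M * diag_of n f) $$ (a,b) = M $$ (a,b) * f b"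
proof -
  have "(M * diag_of n f) $$ (a,b) = (\<Sum>c\<in>{0..<n}. M $$ (a,c) * (if c = b then f c else 0))"
    using M a b by (simp add: scalar_prod_def diag_of_def)
  also have "\<dots> = (\<Sum>c\<in>{0..<n}. if c = b then M $$ (a,c) * f c else 0)"
    by (intro sum.cong refl) auto
  also have "\<dots> = M $$ (a,b) * f b" using b by simp
  finally show ?thesis .
qed

lemma mult_diag_left:
  assumes M: "M \<in> carrier_mat n n" and a: "a < n" and b: "b < n"
  shows "(diag_of n f * M) $$ (a,b) = f a * M $$ (a,b)"
proof -
  have "(diag_of n f * M) $$ (a,b) = (\<Sum>c\<in>{0..<n}. (if a = c then f a else 0) * M $$ (c,b))"
    using M a b by (simp add: scalar_prod_def diag_of_def)
  also have "\<dots> = (\<Sum>c\<in>{0..<n}. if c = a then f a * M $$ (c,b) else 0)"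
    by (intro sum.cong refl) auto
  also have "\<dots> = f a * M $$ (a,b)" using a by simp
  finally show ?thesis .
qed

lemma fc_unique:
  fixes V W :: "real mat"
  assumes V: "V \<in> carrier_mat n n" "V * transpose_mat V = 1\<^sub>m n"
    and W: "W \<in> carrier_mat n n" "W * transpose_mat W = 1\<^sub>m n"
    and eq: "V * diag_of n lam * transpose_mat V = W * diag_of n mu * transpose_mat W"
  shows "V * diag_of n (\<lambda>a. h (lam a)) * transpose_mat V = W * diag_of n (\<lambda>a. h (mu a)) * transpose_mat W"
proof -
  have Vt: "transpose_mat V \<in> carrier_mat n n" and Wt: "transpose_mat W \<in> carrier_mat n n" using V W by auto
  have VtV: "transpose_mat V * V = 1\<^sub>m n" using mat_mult_left_right_inverse[OF V(1) Vt V(2)] .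
  have WtW: "transpose_mat W * W = 1\<^sub>m n" using mat_mult_left_right_inverse[OF W(1) Wt W(2)] .
  note assoc = assoc_mult_mat[of _ n n _ n _ n]
  have c: "diag_of n f \<in> carrier_mat n n" for f by simp
  have cm: "X * Y \<in> carrier_mat n n" if "X \<in> carrier_mat n n" "Y \<in> carrier_mat n n" for X Y
    using that by simp
  have r1: "X * 1\<^sub>m n = X \<and> 1\<^sub>m n * X = X" if "X \<in> carrier_mat n n" for X :: "real mat"
    using that by simp
  define Q where "Q = transpose_mat W * V"
  have Q: "Q \<in> carrier_mat n n" using V W by (simp add: Q_def)
  have cancelV: "transpose_mat V * (V * X) = X" if "X \<in> carrier_mat n n" for X
    using assoc_mult_mat[OF Vt V(1) that, symmetric] VtV that by simp
  have cancelW: "transpose_mat W * (W * X) = X" if "X \<in> carrier_mat n n" for X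
    using assoc_mult_mat[OF Wt W(1) that, symmetric] WtW that by simp
  have cancelW': "W * (transpose_mat W * X) = X" if "X \<in> carrier_mat n n" for X
    using assoc_mult_mat[OF W(1) Wt that, symmetric] W(2) that by simp
  have cancelV': "V * (transpose_mat V * X) = X" if "X \<in> carrier_mat n n" for X
    using assoc_mult_mat[OF V(1) Vt that, symmetric] V(2) that by simp
  have QD: "Q * diag_of n lam = diag_of n mu * Q"
  proof -
    have "Q * diag_of n lam = transpose_mat W * (V * diag_of n lam * transpose_mat V) * V"
      unfolding Q_def using V W Vt Wt by (simp add: assoc cancelV cm VtV r1)
    also have "\<dots> = transpose_mat W * (W * diag_of n mu * transpose_mat W) * V" using eq by simp
    also have "\<dots> = diag_of n mu * Q"
      unfolding Q_def using V W Vt Wt by (simp add: assoc cancelW cm WtW r1)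
    finally show ?thesis .
  qed
  have QDh: "Q * diag_of n (\<lambda>a. h (lam a)) = diag_of n (\<lambda>a. h (mu a)) * Q"
  proof (rule eq_matI)
    fix a b assume "a < dim_row (diag_of n (\<lambda>a. h (mu a)) * Q)" "b < dim_col (diag_of n (\<lambda>a. h (mu a)) * Q)"
    hence ab: "a < n" "b < n" using Q by (auto simp: diag_of_def)
    have "Q $$ (a,b) * lam b = mu a * Q $$ (a,b)"
      using arg_cong[OF QD, of "\<lambda>M. M $$ (a,b)"] mult_diag_right[OF Q ab] mult_diag_left[OF Q ab] by simp
    hence "Q $$ (a,b) = 0 \<or> lam b = mu a" by auto
    thus "(Q * diag_of n (\<lambda>a. h (lam a))) $$ (a, b) = (diag_of n (\<lambda>a. h (mu a)) * Q) $$ (a, b)"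
      using mult_diag_right[OF Q ab] mult_diag_left[OF Q ab] by auto
  qed (use Q in \<open>auto simp: diag_of_def\<close>)
  have "V * diag_of n (\<lambda>a. h (lam a)) * transpose_mat V
      = W * (Q * diag_of n (\<lambda>a. h (lam a))) * transpose_mat V"
    unfolding Q_def using V W Vt Wt by (simp add: assoc cancelW' cm r1)
  also have "\<dots> = W * (diag_of n (\<lambda>a. h (mu a)) * Q) * transpose_mat V" using QDh by simp
  also have "\<dots> = W * diag_of n (\<lambda>a. h (mu a)) * transpose_mat W"
    unfolding Q_def using V W Vt Wt by (simp add: assoc cancelV' cm r1)
  finally show ?thesis .
qed

lemma mat_fun_carrier:
  assumes S: "S \<in> carrier_mat n n" "transpose_mat S = S"
  shows "mat_fun h S \<in> carrier_mat n n"
proof -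
  obtain V D where VD: "V \<in> carrier_mat n n" "D \<in> carrier_mat n n" "V * transpose_mat V = 1\<^sub>m n"
     "diagonal_mat D" "S = V * D * transpose_mat V"
    using spectral[OF S] by blast
  define lam where "lam a = D $$ (a,a)" for a
  have D: "D = diag_of n lam"
    by (rule eq_matI) (use VD(2,4) in \<open>auto simp: diag_of_def diagonal_mat_def lam_def\<close>)
  have dimS: "dim_row S = n" using S by simp
  let ?M = "V * diag_of n (\<lambda>a. h (lam a)) * transpose_mat V"
  have "mat_fun h S = ?M"
    unfolding mat_fun_def dimS
  proof (rule the_equality)
    show "\<exists>V' lam'. V' \<in> carrier_mat n n \<and> V' * transpose_mat V' = 1\<^sub>m n \<and>
        S = V' * diag_of n lam' * transpose_mat V' \<and> ?M = V' * diag_of n (\<lambda>a. h (lam' a)) * transpose_mat V'"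
      using VD D by blast
  next
    fix M assume "\<exists>V' lam'. V' \<in> carrier_mat n n \<and> V' * transpose_mat V' = 1\<^sub>m n \<and>
        S = V' * diag_of n lam' * transpose_mat V' \<and> M = V' * diag_of n (\<lambda>a. h (lam' a)) * transpose_mat V'"
    then obtain V' lam' where V': "V' \<in> carrier_mat n n" "V' * transpose_mat V' = 1\<^sub>m n"
      "S = V' * diag_of n lam' * transpose_mat V'" "M = V' * diag_of n (\<lambda>a. h (lam' a)) * transpose_mat V'"
      by blast
    show "M = ?M" using fc_unique[OF V'(1,2) VD(1,3), of lam' lam h] V'(3,4) VD(5) D by simp
  qed
  have Vt: "transpose_mat V \<in> carrier_mat n n" using VD(1) by simp
  thus ?thesis using mult_carrier_mat[OF mult_carrier_mat[OF VD(1) diag_of_carrier] Vt] \<open>mat_fun h S = ?M\<close> by simp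
qed

lemma sl_concat: "sum_list (map f (concat xss)) = sum_list (map (\<lambda>xs. sum_list (map f xs)) xss)"
  by (induct xss) auto

lemma sl_add: "sum_list (map (\<lambda>y. f y + g y) xs) = sum_list (map f xs) + sum_list (map g xs)"
  for f g :: "'a \<Rightarrow> real"
  by (induct xs) auto

lemma sl_swap: "sum_list (map (\<lambda>ys. sum_list (map (\<lambda>y. F y ys) xs)) L)
   = sum_list (map (\<lambda>y. sum_list (map (\<lambda>ys. F y ys) L)) xs)"
  for F :: "'a \<Rightarrow> 'b \<Rightarrow> real"
  by (induct L) (auto simp: sl_add)

lemma sl_cmult: "sum_list (map (\<lambda>x. c * f x) xs) = c * sum_list (map f xs)" for f :: "'a \<Rightarrow> real"
  by (induct xs) (auto simp: algebra_simps)

lemma sl_mono: "(\<And>x. x \<in> set xs \<Longrightarrow> f x \<le> g x) \<Longrightarrow> sum_list (map f xs) \<le> sum_list (map g xs)"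
  for f g :: "'a \<Rightarrow> real"
  by (induct xs) (auto intro: add_mono)

lemma sl_upt: "sum_list (map f [a..<b]) = (\<Sum>i\<in>{a..<b}. f i)" for f :: "nat \<Rightarrow> real"
  by (simp add: sum_list_distinct_conv_sum_set)

lemma vnorm_sq: "(vnorm v)^2 = v \<bullet> v"
  unfolding vnorm_def using real_sprod_self_nonneg[of v] by simp

lemma vnorm_nonneg: "vnorm v \<ge> 0"
  unfolding vnorm_def using real_sprod_self_nonneg[of v] by simp

lemma vnorm_abs: "vnorm (map_vec abs v) = vnorm v"
  unfolding vnorm_def scalar_prod_def by (simp add: abs_mult_self_eq)

lemma gst_node_Cons: "gst_node h T x (j # p) = gst_node h T (map_vec abs (mat_fun (h j) T *\<^sub>v x)) p"
  by (simp add: gst_node_def)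

lemma gst_node_Nil: "gst_node h T x [] = x"
  by (simp add: gst_node_def)

lemma gst_node_carrier:
  assumes T: "T \<in> carrier_mat g g" "transpose_mat T = T" and x: "x \<in> carrier_vec g"
  shows "gst_node h T x p \<in> carrier_vec g"
  using x
proof (induct p arbitrary: x)
  case Nil thus ?case by (simp add: gst_node_Nil)
next
  case (Cons j p)
  have "mat_fun (h j) T \<in> carrier_mat g g" using mat_fun_carrier[OF T] .
  hence "map_vec abs (mat_fun (h j) T *\<^sub>v x) \<in> carrier_vec g" using Cons.prems by simp
  thus ?case using Cons.hyps by (simp add: gst_node_Cons)
qed

lemma gst_level_bound:
  assumes T: "T \<in> carrier_mat g g" "transpose_mat T = T"
    and FR: "\<forall>v \<in> carrier_vec g. (\<Sum>j\<in>{1..J}. (vnorm (mat_fun (h j) T *\<^sub>v v))\<^sup>2) \<le> B\<^sup>2 * (vnorm v)\<^sup>2"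
    and x: "x \<in> carrier_vec g"
  shows "sum_list (map (\<lambda>p. (vnorm (gst_node h T x p))\<^sup>2) (List.n_lists l [1..<J+1])) \<le> (B\<^sup>2)^l * (vnorm x)\<^sup>2"
  using x
proof (induct l arbitrary: x)
  case 0 thus ?case by (simp add: gst_node_Nil)
next
  case (Suc l)
  define xs where "xs = [1..<J+1]"
  define xv where "xv y = map_vec abs (mat_fun (h y) T *\<^sub>v x)" for y
  have xv: "xv y \<in> carrier_vec g" for y
    using mat_fun_carrier[OF T, of "h y"] Suc.prems by (simp add: xv_def)
  have "sum_list (map (\<lambda>p. (vnorm (gst_node h T x p))\<^sup>2) (List.n_lists (Suc l) xs))
     = sum_list (map (\<lambda>ys. sum_list (map (\<lambda>y. (vnorm (gst_node h T (xv y) ys))\<^sup>2) xs)) (List.n_lists l xs))"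
    by (simp add: sl_concat o_def gst_node_Cons xv_def)
  also have "\<dots> = sum_list (map (\<lambda>y. sum_list (map (\<lambda>ys. (vnorm (gst_node h T (xv y) ys))\<^sup>2) (List.n_lists l xs))) xs)"
    by (rule sl_swap)
  also have "\<dots> \<le> sum_list (map (\<lambda>y. (B\<^sup>2)^l * (vnorm (xv y))\<^sup>2) xs)"
    by (rule sl_mono) (use Suc.hyps xv xs_def in auto)
  also have "\<dots> = (B\<^sup>2)^l * (\<Sum>j\<in>{1..J}. (vnorm (mat_fun (h j) T *\<^sub>v x))\<^sup>2)"
  proof -
    have "set xs = {1..J}" by (auto simp: xs_def)
    moreover have "distinct xs" by (simp add: xs_def)
    ultimately show ?thesis
      by (simp add: sl_cmult sum_list_distinct_conv_sum_set xv_def vnorm_abs)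
  qed
  also have "\<dots> \<le> (B\<^sup>2)^l * (B\<^sup>2 * (vnorm x)\<^sup>2)"
    by (rule mult_left_mono) (use FR Suc.prems in auto)
  also have "\<dots> = (B\<^sup>2)^(Suc l) * (vnorm x)\<^sup>2" by (simp add: algebra_simps)
  finally show ?case unfolding xs_def .
qed

lemma sum_sq_cauchy: "(\<Sum>a<g. f a)^2 \<le> real g * (\<Sum>a<g. (f a)^2)" for f :: "nat \<Rightarrow> real"
proof -
  have "\<bar>\<Sum>a<g. f a\<bar> \<le> (\<Sum>a<g. \<bar>f a\<bar> * \<bar>1\<bar>)" by (simp add: sum_abs)
  also have "\<dots> \<le> L2_set f {..<g} * L2_set (\<lambda>_. 1) {..<g}" by (rule L2_set_mult_ineq)
  also have "L2_set (\<lambda>_. 1::real) {..<g} = sqrt (real g)" by (simp add: L2_set_def)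
  finally have h: "\<bar>\<Sum>a<g. f a\<bar> \<le> L2_set f {..<g} * sqrt (real g)" .
  have "(\<Sum>a<g. f a)^2 = \<bar>\<Sum>a<g. f a\<bar>^2" by simp
  also have "\<dots> \<le> (L2_set f {..<g} * sqrt (real g))^2"
    by (rule power_mono[OF h]) simp
  also have "\<dots> = real g * (\<Sum>a<g. (f a)^2)"
    by (simp add: power_mult_distrib L2_set_def sum_nonneg)
  finally show ?thesis .
qed

lemma vec_of_list_sq: "vec_of_list xs \<bullet> vec_of_list xs = sum_list (map (\<lambda>x. x * x) xs)" for xs :: "real list"
  by (simp add: scalar_prod_def sum_list_sum_nth vec_of_list_index)

lemma length_gst_paths: "length (gst_paths J L) = gst_dim J L"
proof -
  have e: "length (List.n_lists l [1..<J+1]) = J ^ l" for l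
    by (simp only: length_n_lists length_upt) simp
  have "length (gst_paths J L) = sum_list (map (\<lambda>l. length (List.n_lists l [1..<J+1])) [0..<L])"
    unfolding gst_paths_def length_concat map_map o_def ..
  also have "\<dots> = sum_list (map (\<lambda>l. J ^ l) [0..<L])" by (simp only: e)
  also have "\<dots> = gst_dim J L" unfolding gst_dim_def
    by (simp add: sum_list_distinct_conv_sum_set atLeast0LessThan)
  finally show ?thesis .
qed

lemma gst_carrier: "gst J L h T x \<in> carrier_vec (gst_dim J L)"
  by (intro carrier_vecI) (simp add: gst_def length_gst_paths)

lemma coef_bound:
  assumes T: "T \<in> carrier_mat g g" "transpose_mat T = T" and x: "x \<in> carrier_vec g" and g: "g > 0"
  shows "(gst_coef h T x p)^2 \<le> (vnorm (gst_node h T x p))^2 / real g"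
proof -
  define \<Phi> where "\<Phi> = gst_node h T x p"
  have P: "\<Phi> \<in> carrier_vec g" using gst_node_carrier[OF T x] by (simp add: \<Phi>_def)
  have dx: "dim_vec x = g" using x by simp
  have "(gst_coef h T x p)^2 = (1 / real g)^2 * (\<Sum>a<g. \<Phi> $ a)^2"
    by (simp add: gst_coef_def dx \<Phi>_def power_divide)
  also have "\<dots> \<le> (1 / real g)^2 * (real g * (\<Sum>a<g. (\<Phi> $ a)^2))"
    by (rule mult_left_mono[OF sum_sq_cauchy]) simp
  also have "\<dots> = (\<Sum>a<g. (\<Phi> $ a)^2) / real g" using g by (simp add: power2_eq_square field_simps)
  also have "(\<Sum>a<g. (\<Phi> $ a)^2) = (vnorm \<Phi>)^2"
    using P unfolding vnorm_sq by (simp add: scalar_prod_def power2_eq_square atLeast0LessThan)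
  finally show ?thesis by (simp add: \<Phi>_def)
qed

lemma gst_norm_bound:
  assumes T: "T \<in> carrier_mat g g" "transpose_mat T = T"
    and FR: "\<forall>v \<in> carrier_vec g. (\<Sum>j\<in>{1..J}. (vnorm (mat_fun (h j) T *\<^sub>v v))\<^sup>2) \<le> B\<^sup>2 * (vnorm v)\<^sup>2"
    and x: "x \<in> carrier_vec g" and xb: "\<forall>a<g. \<bar>x $ a\<bar> \<le> 1" and g: "g > 0"
  shows "vnorm (gst J L h T x) \<le> sqrt (\<Sum>l<L. B ^ (2 * l))"
proof -
  have xn: "(vnorm x)^2 \<le> real g"
  proof -
    have "(vnorm x)^2 = (\<Sum>a<g. x $ a * x $ a)" using x by (simp add: vnorm_sq scalar_prod_def atLeast0LessThan)
    also have "\<dots> \<le> (\<Sum>a<g. 1)"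
    proof (rule sum_mono)
      fix a assume "a \<in> {..<g}"
      hence "\<bar>x $ a\<bar> \<le> 1" using xb by auto
      thus "x $ a * x $ a \<le> 1" using abs_square_le_1[of "x $ a"] by (simp add: power2_eq_square)
    qed
    finally show ?thesis by simp
  qed
  have "(vnorm (gst J L h T x))^2 = sum_list (map (\<lambda>p. (gst_coef h T x p)^2) (gst_paths J L))"
    unfolding gst_def vnorm_sq vec_of_list_sq by (simp add: o_def power2_eq_square)
  also have "\<dots> = sum_list (map (\<lambda>l. sum_list (map (\<lambda>p. (gst_coef h T x p)^2) (List.n_lists l [1..<J+1]))) [0..<L])"
    by (simp add: gst_paths_def sl_concat o_def)
  also have "\<dots> \<le> sum_list (map (\<lambda>l. sum_list (map (\<lambda>p. (vnorm (gst_node h T x p))^2 / real g) (List.n_lists l [1..<J+1]))) [0..<L])"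
    by (intro sl_mono coef_bound[OF T x g])
  also have "\<dots> \<le> sum_list (map (\<lambda>l. (B\<^sup>2)^l * (vnorm x)\<^sup>2 / real g) [0..<L])"
  proof (rule sl_mono)
    fix l
    have "sum_list (map (\<lambda>p. (vnorm (gst_node h T x p))^2 / real g) (List.n_lists l [1..<J+1]))
        = sum_list (map (\<lambda>p. (vnorm (gst_node h T x p))^2) (List.n_lists l [1..<J+1])) / real g"
      using sl_cmult[of "1 / real g" "\<lambda>p. (vnorm (gst_node h T x p))^2" "List.n_lists l [1..<J+1]"]
      by simp
    also have "\<dots> \<le> (B\<^sup>2)^l * (vnorm x)\<^sup>2 / real g"
      by (rule divide_right_mono[OF gst_level_bound[OF T FR x]]) simp
    finally show "sum_list (map (\<lambda>p. (vnorm (gst_node h T x p))^2 / real g) (List.n_lists l [1..<J+1]))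
        \<le> (B\<^sup>2)^l * (vnorm x)\<^sup>2 / real g" .
  qed
  also have "\<dots> \<le> sum_list (map (\<lambda>l. B ^ (2 * l)) [0..<L])"
  proof (rule sl_mono)
    fix l
    have "(vnorm x)\<^sup>2 / real g \<le> 1" using xn g by simp
    hence "(B\<^sup>2)^l * ((vnorm x)\<^sup>2 / real g) \<le> (B\<^sup>2)^l * 1"
      by (rule mult_left_mono) simp
    thus "(B\<^sup>2)^l * (vnorm x)\<^sup>2 / real g \<le> B ^ (2 * l)" by (simp add: power_mult)
  qed
  also have "\<dots> = (\<Sum>l<L. B ^ (2 * l))" by (simp add: sl_upt atLeast0LessThan)
  finally have "(vnorm (gst J L h T x))^2 \<le> (\<Sum>l<L. B ^ (2 * l))" .
  hence "sqrt ((vnorm (gst J L h T x))^2) \<le> sqrt (\<Sum>l<L. B ^ (2 * l))" by (rule real_sqrt_le_mono)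
  thus ?thesis using vnorm_nonneg by simp
qed

lemma convex_d2_nonneg:
  fixes f f' f'' :: "real \<Rightarrow> real"
  assumes cv: "convex_on UNIV f" and d1: "\<And>x. (f has_real_derivative f' x) (at x)"
    and d2: "\<And>x. (f' has_real_derivative f'' x) (at x)"
  shows "f'' s \<ge> 0"
proof (rule ccontr)
  assume "\<not> f'' s \<ge> 0" hence neg: "f'' s < 0" by simp
  obtain e1 where e1: "e1 > 0" "\<forall>h>0. h < e1 \<longrightarrow> f' (s + h) < f' s"
    using DERIV_neg_dec_right[OF d2 neg] by blast
  obtain e2 where e2: "e2 > 0" "\<forall>h>0. h < e2 \<longrightarrow> f' s < f' (s - h)"
    using DERIV_neg_dec_left[OF d2 neg] by blast
  define h where "h = min e1 e2 / 2"
  have h: "h > 0" "h < e1" "h < e2" using e1 e2 by (auto simp: h_def)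
  obtain z1 where z1: "z1 > s" "z1 < s + h" "f (s + h) - f s = (s + h - s) * f' z1"
    using MVT2[of s "s + h" f f'] h d1 by auto
  have "f' z1 < f' s" using e1(2)[rule_format, of "z1 - s"] z1 h by auto
  hence a: "f (s + h) - f s < h * f' s" using z1(3) h by (simp add: mult_strict_left_mono)
  obtain z2 where z2: "z2 > s - h" "z2 < s" "f s - f (s - h) = (s - (s - h)) * f' z2"
    using MVT2[of "s - h" s f f'] h d1 by auto
  have "f' s < f' z2" using e2(2)[rule_format, of "s - z2"] z2 h by auto
  hence b: "f s - f (s - h) > h * f' s" using z2(3) h by (simp add: mult_strict_left_mono)
  have mid: "(1 - 1/2) *\<^sub>R (s - h) + (1/2::real) *\<^sub>R (s + h) = s" by (simp add: field_simps)
  have "f s \<le> (1 - 1/2) * f (s - h) + (1/2) * f (s + h)"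
    using convex_onD[OF cv, of "1/2" "s - h" "s + h"] unfolding mid by simp
  hence "2 * f s \<le> f (s - h) + f (s + h)" by (simp add: field_simps)
  thus False using a b by linarith
qed

lemma taylor1:
  fixes f f' :: "real \<Rightarrow> real"
  assumes d: "\<And>x. (f has_real_derivative f' x) (at x)"
    and lip: "\<And>a b. \<bar>f' a - f' b\<bar> \<le> c * \<bar>a - b\<bar>"
  shows "\<bar>f (s + t) - f s - f' s * t\<bar> \<le> c * t^2"
proof -
  have c: "c \<ge> 0" using lip[of 1 0] by simp
  have main: "\<bar>t\<bar> * \<bar>f' z - f' s\<bar> \<le> c * t^2" if "\<bar>z - s\<bar> \<le> \<bar>t\<bar>" for z
  proof -
    have "\<bar>t\<bar> * \<bar>f' z - f' s\<bar> \<le> \<bar>t\<bar> * (c * \<bar>z - s\<bar>)" by (rule mult_left_mono[OF lip]) simp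
    also have "\<dots> \<le> \<bar>t\<bar> * (c * \<bar>t\<bar>)" by (rule mult_left_mono[OF mult_left_mono[OF that c]]) simp
    also have "\<dots> = c * t^2" by (simp add: power2_eq_square abs_mult_self_eq)
    finally show ?thesis .
  qed
  consider "t > 0" | "t < 0" | "t = 0" by linarith
  thus ?thesis
  proof cases
    case 1
    obtain z where z: "z > s" "z < s + t" "f (s + t) - f s = (s + t - s) * f' z"
      using MVT2[of s "s + t" f f'] 1 d by auto
    have "\<bar>f (s + t) - f s - f' s * t\<bar> = \<bar>t\<bar> * \<bar>f' z - f' s\<bar>"
      using z(3) by (simp add: algebra_simps abs_mult[symmetric])
    also have "\<dots> \<le> c * t^2" by (rule main) (use z 1 in auto)
    finally show ?thesis .
  next
    case 2
    obtain z where z: "z > s + t" "z < s" "f s - f (s + t) = (s - (s + t)) * f' z"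
      using MVT2[of "s + t" s f f'] 2 d by auto
    have "\<bar>f (s + t) - f s - f' s * t\<bar> = \<bar>t\<bar> * \<bar>f' z - f' s\<bar>"
    proof -
      have "f (s + t) - f s - f' s * t = t * (f' z - f' s)" using z(3) by (simp add: algebra_simps)
      thus ?thesis by (simp add: abs_mult)
    qed
    also have "\<dots> \<le> c * t^2" by (rule main) (use z 2 in auto)
    finally show ?thesis .
  next
    case 3 thus ?thesis by simp
  qed
qed

lemma vnorm_L2: "v \<in> carrier_vec d \<Longrightarrow> vnorm v = L2_set (\<lambda>a. v $ a) {..<d}"
  by (simp add: vnorm_def scalar_prod_def L2_set_def power2_eq_square atLeast0LessThan)

lemma vec_cs: assumes "v \<in> carrier_vec d" "w \<in> carrier_vec d"
  shows "\<bar>v \<bullet> w\<bar> \<le> vnorm v * vnorm w"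
proof -
  have "\<bar>v \<bullet> w\<bar> = \<bar>\<Sum>a<d. v $ a * w $ a\<bar>" using assms by (simp add: scalar_prod_def atLeast0LessThan)
  also have "\<dots> \<le> (\<Sum>a<d. \<bar>v $ a\<bar> * \<bar>w $ a\<bar>)" by (metis (no_types, lifting) abs_mult sum.cong sum_abs)
  also have "\<dots> \<le> L2_set (\<lambda>a. v $ a) {..<d} * L2_set (\<lambda>a. w $ a) {..<d}" by (rule L2_set_mult_ineq)
  finally show ?thesis using assms by (simp add: vnorm_L2)
qed

lemma L2_sum_le: "L2_set (\<lambda>a. \<Sum>i<n. f i a) A \<le> (\<Sum>i<n. L2_set (f i) A)"
  for n :: nat and f :: "nat \<Rightarrow> 'a \<Rightarrow> real"
proof (induct n)
  case 0 thus ?case by (simp add: L2_set_def)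
next
  case (Suc n)
  have "L2_set (\<lambda>a. \<Sum>i<Suc n. f i a) A = L2_set (\<lambda>a. (\<Sum>i<n. f i a) + f n a) A" by simp
  also have "\<dots> \<le> L2_set (\<lambda>a. \<Sum>i<n. f i a) A + L2_set (f n) A" by (rule L2_set_triangle_ineq)
  also have "\<dots> \<le> (\<Sum>i<n. L2_set (f i) A) + L2_set (f n) A" using Suc by simp
  finally show ?case by simp
qed

lemma L2_scale: "L2_set (\<lambda>a. r * f a) A = \<bar>r\<bar> * L2_set f A"
  by (simp add: L2_set_def power_mult_distrib sum_distrib_left[symmetric] real_sqrt_mult)

lemma grad_zero:
  fixes ls ls' :: "real \<Rightarrow> 'y \<Rightarrow> real" and z :: "nat \<Rightarrow> real vec" and w :: "real vec"
  assumes d1: "\<forall>s t. ((\<lambda>s. ls s t) has_real_derivative ls' s t) (at s)"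
    and zc: "\<forall>i<n. z i \<in> carrier_vec d" and w: "w \<in> carrier_vec d"
    and mn: "\<forall>v \<in> carrier_vec d. risk ls lam n z y w \<le> risk ls lam n z y v"
  shows "risk_grad ls' lam d n z y w = 0\<^sub>v d"
proof (rule eq_vecI)
  show "dim_vec (risk_grad ls' lam d n z y w) = dim_vec (0\<^sub>v d)" by (simp add: risk_grad_def)
  fix a assume "a < dim_vec (0\<^sub>v d)" hence a: "a < d" by simp
  define e where "e = (unit_vec d a :: real vec)"
  have e: "e \<in> carrier_vec d" by (simp add: e_def)
  define \<phi> where "\<phi> t = risk ls lam n z y (w + t \<cdot>\<^sub>v e)" for t
  have wt: "w + t \<cdot>\<^sub>v e \<in> carrier_vec d" for t using w e by simp
  have dot: "(w + t \<cdot>\<^sub>v e) \<bullet> z i = w \<bullet> z i + t * z i $ a" if "i < n" for i t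
  proof -
    have zi: "z i \<in> carrier_vec d" using zc that by simp
    have "(w + t \<cdot>\<^sub>v e) \<bullet> z i = w \<bullet> z i + (t \<cdot>\<^sub>v e) \<bullet> z i"
      using add_scalar_prod_distrib[OF w _ zi, of "t \<cdot>\<^sub>v e"] e by simp
    also have "(t \<cdot>\<^sub>v e) \<bullet> z i = t * (e \<bullet> z i)" using e zi by (simp add: smult_scalar_prod_distrib)
    also have "e \<bullet> z i = z i $ a" unfolding e_def using scalar_prod_left_unit[OF zi a] .
    finally show ?thesis .
  qed
  have nrm: "(vnorm (w + t \<cdot>\<^sub>v e))^2 = w \<bullet> w + 2 * t * w $ a + t^2" for t
  proof -
    have ew: "e \<bullet> w = w $ a" unfolding e_def using scalar_prod_left_unit[OF w a] .
    have we: "w \<bullet> e = w $ a" using ew comm_scalar_prod[OF w e] by simp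
    have ee: "e \<bullet> e = 1" unfolding e_def using scalar_prod_left_unit[of "unit_vec d a" d a] a by simp
    have "(vnorm (w + t \<cdot>\<^sub>v e))^2 = (w + t \<cdot>\<^sub>v e) \<bullet> (w + t \<cdot>\<^sub>v e)" by (rule vnorm_sq)
    also have "\<dots> = w \<bullet> w + t * (w \<bullet> e) + t * (e \<bullet> w) + t * t * (e \<bullet> e)"
      using w e
      by (simp add: add_scalar_prod_distrib[of _ d] scalar_prod_add_distrib[of _ d]
          smult_scalar_prod_distrib[of _ d] scalar_prod_smult_distrib[of _ d] algebra_simps)
    also have "\<dots> = w \<bullet> w + 2 * t * w $ a + t^2" using ew we ee by (simp add: power2_eq_square)
    finally show ?thesis .
  qed
  define F where "F t = (\<Sum>i<n. ls (w \<bullet> z i + t * z i $ a) (y i) + lam / 2 * (w \<bullet> w + 2 * t * w $ a + t^2))" for t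
  have \<phi>eq: "\<phi> t = F t" for t
    unfolding \<phi>_def risk_def F_def by (intro sum.cong refl) (simp add: dot nrm)
  have der_i: "((\<lambda>t. ls (w \<bullet> z i + t * z i $ a) (y i) + lam / 2 * (w \<bullet> w + 2 * t * w $ a + t^2))
      has_real_derivative (ls' (w \<bullet> z i) (y i) * z i $ a + lam * w $ a)) (at 0)" for i
  proof -
    have g: "((\<lambda>t. w \<bullet> z i + t * z i $ a) has_real_derivative z i $ a) (at 0)"
      by (auto intro!: derivative_eq_intros)
    have d1i: "((\<lambda>s. ls s (y i)) has_real_derivative ls' (w \<bullet> z i) (y i)) (at (w \<bullet> z i + 0 * z i $ a))"
      using d1 by simp
    have c1: "((\<lambda>t. ls (w \<bullet> z i + t * z i $ a) (y i)) has_real_derivative ls' (w \<bullet> z i) (y i) * z i $ a) (at 0)"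
      using DERIV_chain2[OF d1i g] by simp
    have c2: "((\<lambda>t. lam / 2 * (w \<bullet> w + 2 * t * w $ a + t^2)) has_real_derivative lam * w $ a) (at 0)"
      by (auto intro!: derivative_eq_intros)
    show ?thesis using DERIV_add[OF c1 c2] by simp
  qed
  have der: "(F has_real_derivative (\<Sum>i<n. ls' (w \<bullet> z i) (y i) * z i $ a + lam * w $ a)) (at 0)"
    unfolding F_def by (rule DERIV_sum) (rule der_i)
  have "\<forall>t. \<bar>0 - t\<bar> < 1 \<longrightarrow> F 0 \<le> F t"
  proof (intro allI impI)
    fix t
    have "w + 0 \<cdot>\<^sub>v e = w" using w e by (intro eq_vecI) auto
    hence "F 0 = risk ls lam n z y w" using \<phi>eq[of 0] by (simp add: \<phi>_def)
    also have "\<dots> \<le> \<phi> t" unfolding \<phi>_def using mn wt by blast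
    finally show "F 0 \<le> F t" using \<phi>eq by simp
  qed
  hence "(\<Sum>i<n. ls' (w \<bullet> z i) (y i) * z i $ a + lam * w $ a) = 0"
    using DERIV_local_min[OF der, of 1] by simp
  thus "risk_grad ls' lam d n z y w $ a = 0\<^sub>v d $ a" using a by (simp add: risk_grad_def)
qed

lemma newton_bound:
  fixes ls' ls'' :: "real \<Rightarrow> 'y \<Rightarrow> real" and Z :: "nat \<Rightarrow> real vec" and w Dl :: "real vec"
  assumes n: "n > 0" and lam: "lam > 0"
    and Zc: "\<forall>i<n. Z i \<in> carrier_vec d" and ZF: "\<forall>i<n. vnorm (Z i) \<le> F"
    and d2: "\<forall>s t. ((\<lambda>s. ls' s t) has_real_derivative ls'' s t) (at s)"
    and nn: "\<forall>i<n. \<forall>s. ls'' s (y i) \<ge> 0"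
    and A4: "\<forall>i<n. \<forall>s t. \<bar>ls'' s (y i) - ls'' t (y i)\<bar> \<le> \<gamma>2 * \<bar>s - t\<bar>"
    and w: "w \<in> carrier_vec d" and Dl: "Dl \<in> carrier_vec d"
    and G0: "risk_grad ls' lam d n Z y w + Dl = 0\<^sub>v d"
    and K: "vnorm Dl \<le> K"
  shows "vnorm (risk_grad ls' lam d n Z y (w + mat_inv d (risk_hess ls'' lam d n Z y w) *\<^sub>v Dl))
     \<le> \<gamma>2 * real n * F^3 * (K / (real n * lam))^2"
proof -
  define H where "H = risk_hess ls'' lam d n Z y w"
  define c where "c i = ls'' (w \<bullet> Z i) (y i)" for i
  have H: "H \<in> carrier_mat d d" by (simp add: H_def risk_hess_def)
  have Hent: "H $$ (a,b) = (\<Sum>i<n. c i * Z i $ a * Z i $ b) + real n * (if a = b then lam else 0)"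
    if "a<d" "b<d" for a b
    using that by (simp add: H_def risk_hess_def c_def sum.distrib)
  have Hv: "(H *\<^sub>v v) $ a = (\<Sum>i<n. c i * Z i $ a * (Z i \<bullet> v)) + real n * lam * v $ a"
    if v: "v \<in> carrier_vec d" and a: "a < d" for v a
  proof -
    have "(H *\<^sub>v v) $ a = (\<Sum>b<d. H $$ (a,b) * v $ b)" using H a v by (simp add: scalar_prod_def atLeast0LessThan)
    also have "\<dots> = (\<Sum>b<d. (\<Sum>i<n. c i * Z i $ a * Z i $ b) * v $ b)
        + (\<Sum>b<d. real n * (if a = b then lam else 0) * v $ b)"
      by (simp add: Hent a sum.distrib distrib_right)
    also have "(\<Sum>b<d. (\<Sum>i<n. c i * Z i $ a * Z i $ b) * v $ b) = (\<Sum>i<n. c i * Z i $ a * (Z i \<bullet> v))"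
    proof -
      have "(\<Sum>b<d. (\<Sum>i<n. c i * Z i $ a * Z i $ b) * v $ b) = (\<Sum>b<d. \<Sum>i<n. c i * Z i $ a * (Z i $ b * v $ b))"
        by (simp add: sum_distrib_right mult.assoc)
      also have "\<dots> = (\<Sum>i<n. \<Sum>b<d. c i * Z i $ a * (Z i $ b * v $ b))" by (rule sum.swap)
      also have "\<dots> = (\<Sum>i<n. c i * Z i $ a * (Z i \<bullet> v))"
        using v by (simp add: sum_distrib_left scalar_prod_def atLeast0LessThan)
      finally show ?thesis .
    qed
    also have "(\<Sum>b<d. real n * (if a = b then lam else 0) * v $ b) = (\<Sum>b<d. if b = a then real n * lam * v $ b else 0)"
      by (intro sum.cong refl) auto
    also have "\<dots> = real n * lam * v $ a" using a by simp
    finally show ?thesis .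
  qed
  have quad: "v \<bullet> (H *\<^sub>v v) = (\<Sum>i<n. c i * (Z i \<bullet> v)^2) + real n * lam * (v \<bullet> v)"
    if v: "v \<in> carrier_vec d" for v
  proof -
    have "v \<bullet> (H *\<^sub>v v) = (\<Sum>a<d. v $ a * (H *\<^sub>v v) $ a)"
      using H by (simp add: scalar_prod_def atLeast0LessThan del: index_mult_mat_vec)
    also have "\<dots> = (\<Sum>a<d. v $ a * ((\<Sum>i<n. c i * Z i $ a * (Z i \<bullet> v)) + real n * lam * v $ a))"
      by (intro sum.cong refl) (simp add: Hv[OF v] del: index_mult_mat_vec)
    also have "\<dots> = (\<Sum>a<d. \<Sum>i<n. c i * (Z i \<bullet> v) * (Z i $ a * v $ a)) + real n * lam * (\<Sum>a<d. v $ a * v $ a)"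
      by (simp add: algebra_simps sum.distrib sum_distrib_left)
    also have "(\<Sum>a<d. \<Sum>i<n. c i * (Z i \<bullet> v) * (Z i $ a * v $ a)) = (\<Sum>i<n. c i * (Z i \<bullet> v) * (Z i \<bullet> v))"
      by (subst sum.swap) (use v in \<open>simp add: sum_distrib_left scalar_prod_def atLeast0LessThan\<close>)
    also have "(\<Sum>a<d. v $ a * v $ a) = v \<bullet> v" using v by (simp add: scalar_prod_def atLeast0LessThan)
    finally show ?thesis by (simp add: power2_eq_square mult.assoc)
  qed
  have quad_ge: "v \<bullet> (H *\<^sub>v v) \<ge> real n * lam * (v \<bullet> v)" if v: "v \<in> carrier_vec d" for v
  proof -
    have "(\<Sum>i<n. c i * (Z i \<bullet> v)^2) \<ge> 0" using nn by (intro sum_nonneg) (simp add: c_def)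
    thus ?thesis using quad[OF v] by simp
  qed
  have inj: "v = 0\<^sub>v d" if v: "v \<in> carrier_vec d" and Hv0: "H *\<^sub>v v = 0\<^sub>v d" for v
  proof (rule ccontr)
    assume "v \<noteq> 0\<^sub>v d"
    hence "v \<bullet> v > 0" using real_sprod_self_pos[OF v] by simp
    hence "real n * lam * (v \<bullet> v) > 0" using n lam by simp
    moreover have "v \<bullet> (H *\<^sub>v v) = 0" using Hv0 v by simp
    ultimately show False using quad_ge[OF v] by simp
  qed
  have "det H \<noteq> 0" using det_0_iff_vec_prod_zero_field[OF H] inj by blast
  from det_non_zero_imp_unit[OF H this, of undefined]
  obtain Hi where Hi: "Hi \<in> carrier_mat d d" "Hi * H = 1\<^sub>m d" "H * Hi = 1\<^sub>m d"
    unfolding Units_def ring_mat_def by auto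
  have mi: "mat_inv d H = Hi"
    unfolding mat_inv_def
  proof (rule the_equality)
    show "Hi \<in> carrier_mat d d \<and> H * Hi = 1\<^sub>m d \<and> Hi * H = 1\<^sub>m d" using Hi by simp
    fix B assume B: "B \<in> carrier_mat d d \<and> H * B = 1\<^sub>m d \<and> B * H = 1\<^sub>m d"
    hence Bc: "B \<in> carrier_mat d d" and BH: "B * H = 1\<^sub>m d" by auto
    have "B = B * (H * Hi)" using Bc Hi by simp
    also have "\<dots> = (B * H) * Hi" using Bc Hi H by (simp add: assoc_mult_mat[of _ d d _ d _ d])
    also have "\<dots> = Hi" using BH Hi by simp
    finally show "B = Hi" .
  qed
  define u where "u = Hi *\<^sub>v Dl"
  have u: "u \<in> carrier_vec d" using Hi Dl by (simp add: u_def)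
  have Hu: "H *\<^sub>v u = Dl"
  proof -
    have "H *\<^sub>v u = (H * Hi) *\<^sub>v Dl" unfolding u_def using assoc_mult_mat_vec[OF H Hi(1) Dl] by simp
    thus ?thesis using Hi Dl by simp
  qed
  have Dl0: "vnorm Dl \<ge> 0" by (rule vnorm_nonneg)
  have unorm: "vnorm u \<le> K / (real n * lam)"
  proof -
    have "real n * lam * (vnorm u)^2 \<le> u \<bullet> (H *\<^sub>v u)" using quad_ge[OF u] by (simp add: vnorm_sq)
    also have "\<dots> = u \<bullet> Dl" using Hu by simp
    also have "\<dots> \<le> vnorm u * vnorm Dl" using vec_cs[OF u Dl] by simp
    also have "\<dots> \<le> vnorm u * K" by (rule mult_left_mono[OF K vnorm_nonneg])
    finally have ineq: "real n * lam * (vnorm u)^2 \<le> vnorm u * K" .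
    have nl: "real n * lam > 0" using n lam by simp
    show ?thesis
    proof (cases "vnorm u = 0")
      case True thus ?thesis using K Dl0 nl by simp
    next
      case False
      hence pos: "vnorm u > 0" using vnorm_nonneg[of u] by simp
      have "vnorm u * (real n * lam * vnorm u) \<le> vnorm u * K" using ineq by (simp add: power2_eq_square algebra_simps)
      hence "real n * lam * vnorm u \<le> K" using pos by simp
      thus ?thesis using nl by (simp add: pos_le_divide_eq mult.commute)
    qed
  qed
  define G where "G x = risk_grad ls' lam d n Z y x" for x
  have Ga: "G x $ a = (\<Sum>i<n. ls' (x \<bullet> Z i) (y i) * Z i $ a) + real n * lam * x $ a" if "a < d" for x a
    using that by (simp add: G_def risk_grad_def sum.distrib)
  define s where "s i = w \<bullet> Z i" for i
  define t where "t i = u \<bullet> Z i" for i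
  define r where "r i = ls' (s i + t i) (y i) - ls' (s i) (y i) - c i * t i" for i
  have wu: "(w + u) \<bullet> Z i = s i + t i" if "i < n" for i
    using add_scalar_prod_distrib[OF w u, of "Z i"] Zc that by (simp add: s_def t_def)
  have Zu: "Z i \<bullet> u = t i" if "i < n" for i
    using comm_scalar_prod[of "Z i" d u] Zc that u by (simp add: t_def)
  have Gw': "G (w + u) = vec d (\<lambda>a. \<Sum>i<n. r i * Z i $ a)"
  proof (rule eq_vecI)
    fix a assume "a < dim_vec (vec d (\<lambda>a. \<Sum>i<n. r i * Z i $ a))"
    hence a: "a < d" by simp
    have g0: "G w $ a + Dl $ a = 0" using arg_cong[OF G0, of "\<lambda>v. v $ a"] a Dl by (simp add: G_def)
    have dla: "Dl $ a = (\<Sum>i<n. c i * Z i $ a * t i) + real n * lam * u $ a"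
      using Hv[OF u a] Hu Zu by simp
    have e1: "G (w + u) $ a = (\<Sum>i<n. ls' (s i + t i) (y i) * Z i $ a) + real n * lam * w $ a + real n * lam * u $ a"
    proof -
      have "(\<Sum>i<n. ls' ((w + u) \<bullet> Z i) (y i) * Z i $ a) = (\<Sum>i<n. ls' (s i + t i) (y i) * Z i $ a)"
        by (intro sum.cong refl) (simp add: wu)
      moreover have "(w + u) $ a = w $ a + u $ a" using w u a by simp
      ultimately show ?thesis using Ga[OF a, of "w + u"] by (simp add: distrib_left)
    qed
    have e2: "G w $ a = (\<Sum>i<n. ls' (s i) (y i) * Z i $ a) + real n * lam * w $ a"
      using Ga[OF a, of w] by (simp add: s_def)
    have e3: "(\<Sum>i<n. r i * Z i $ a) = (\<Sum>i<n. ls' (s i + t i) (y i) * Z i $ a)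
        - (\<Sum>i<n. ls' (s i) (y i) * Z i $ a) - (\<Sum>i<n. c i * Z i $ a * t i)"
    proof -
      have "(\<Sum>i<n. r i * Z i $ a) = (\<Sum>i<n. ls' (s i + t i) (y i) * Z i $ a - ls' (s i) (y i) * Z i $ a - c i * Z i $ a * t i)"
        by (intro sum.cong refl) (simp add: r_def algebra_simps)
      also have "\<dots> = (\<Sum>i<n. ls' (s i + t i) (y i) * Z i $ a)
        - (\<Sum>i<n. ls' (s i) (y i) * Z i $ a) - (\<Sum>i<n. c i * Z i $ a * t i)"
        by (simp only: sum_subtractf)
      finally show ?thesis .
    qed
    have "G (w + u) $ a = (\<Sum>i<n. r i * Z i $ a)" using g0 e1 e2 e3 dla by linarith
    thus "G (w + u) $ a = vec d (\<lambda>a. \<Sum>i<n. r i * Z i $ a) $ a" using a by simp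
  qed (simp add: G_def risk_grad_def)
  have g2: "\<gamma>2 \<ge> 0" using A4 n by (metis abs_ge_zero abs_one diff_zero mult.right_neutral order_trans)
  have F0: "F \<ge> 0" using ZF n vnorm_nonneg[of "Z 0"] by (metis order_trans)
  have rb: "\<bar>r i\<bar> \<le> \<gamma>2 * (t i)^2" if "i < n" for i
    unfolding r_def c_def s_def[symmetric]
    by (rule taylor1[of "\<lambda>s. ls' s (y i)" "\<lambda>s. ls'' s (y i)" \<gamma>2 "s i" "t i"])
       (use d2 A4 that in auto)
  have tb: "(t i)^2 \<le> (vnorm u * F)^2" if "i < n" for i
  proof -
    have "\<bar>t i\<bar> \<le> vnorm u * vnorm (Z i)" unfolding t_def using vec_cs[OF u, of "Z i"] Zc that by simp
    also have "\<dots> \<le> vnorm u * F" by (rule mult_left_mono) (use ZF that vnorm_nonneg in auto)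
    finally have "\<bar>t i\<bar> \<le> vnorm u * F" .
    hence "\<bar>t i\<bar>^2 \<le> (vnorm u * F)^2" by (rule power_mono) simp
    thus ?thesis by simp
  qed
  have "vnorm (G (w + u)) = L2_set (\<lambda>a. \<Sum>i<n. r i * Z i $ a) {..<d}"
    unfolding Gw' by (subst vnorm_L2[of _ d]) (auto intro!: L2_set_cong)
  also have "\<dots> \<le> (\<Sum>i<n. L2_set (\<lambda>a. r i * Z i $ a) {..<d})" by (rule L2_sum_le)
  also have "\<dots> = (\<Sum>i<n. \<bar>r i\<bar> * vnorm (Z i))"
    by (intro sum.cong refl) (use Zc in \<open>simp add: L2_scale vnorm_L2[of _ d]\<close>)
  also have "\<dots> \<le> (\<Sum>i<n. (\<gamma>2 * (vnorm u * F)^2) * F)"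
  proof (rule sum_mono)
    fix i assume "i \<in> {..<n}" hence i: "i < n" by simp
    have "\<bar>r i\<bar> \<le> \<gamma>2 * (vnorm u * F)^2"
      using rb[OF i] mult_left_mono[OF tb[OF i] g2] by linarith
    thus "\<bar>r i\<bar> * vnorm (Z i) \<le> (\<gamma>2 * (vnorm u * F)^2) * F"
      using ZF i vnorm_nonneg g2 by (intro mult_mono) auto
  qed
  also have "\<dots> = \<gamma>2 * real n * F^3 * (vnorm u)^2" by (simp add: power2_eq_square power3_eq_cube algebra_simps)
  also have "\<dots> \<le> \<gamma>2 * real n * F^3 * (K / (real n * lam))^2"
    by (rule mult_left_mono[OF power_mono[OF unorm vnorm_nonneg]]) (use g2 F0 in simp)
  finally show ?thesis by (simp add: G_def H_def[symmetric] mi u_def)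
qed

theorem corollary4p5:
  fixes n J L m :: nat
    and g :: "nat \<Rightarrow> nat"
    and S :: "nat \<Rightarrow> real mat"
    and x :: "nat \<Rightarrow> real vec"
    and y :: "nat \<Rightarrow> 'y"
    and h :: "nat \<Rightarrow> real \<Rightarrow> real"
    and A B lam C1 C2 \<gamma>1 \<gamma>2 :: real
    and ls ls' ls'' :: "real \<Rightarrow> 'y \<Rightarrow> real"
    and R :: "nat \<Rightarrow> nat set"
    and wstar :: "real vec"
  defines "d \<equiv> gst_dim J L"
    and "z \<equiv> (\<lambda>i. gst J L h (S i) (x i))"
    and "z' \<equiv> (\<lambda>i. if R i = {} then gst J L h (S i) (x i)
                   else gst J L h (remove_shift (R i) (S i)) (remove_signal (R i) (x i)))"
  assumes J_pos: "J > 0" and L_pos: "L > 0"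
    and graphs: "\<forall>i<n. S i \<in> carrier_mat (g i) (g i) \<and> transpose_mat (S i) = S i
                        \<and> x i \<in> carrier_vec (g i)"
    and signal_bound: "\<forall>i<n. \<forall>a<g i. \<bar>x i $ a\<bar> \<le> 1"
    and frame: "0 < A" "A \<le> B"
      "\<forall>i<n. \<forall>T \<in> {S i, remove_shift (R i) (S i)}. \<forall>v \<in> carrier_vec (g i).
          A\<^sup>2 * (vnorm v)\<^sup>2 \<le> (\<Sum>j\<in>{1..J}. (vnorm (mat_fun (h j) T *\<^sub>v v))\<^sup>2)
        \<and> (\<Sum>j\<in>{1..J}. (vnorm (mat_fun (h j) T *\<^sub>v v))\<^sup>2) \<le> B\<^sup>2 * (vnorm v)\<^sup>2"
    and removal: "\<forall>i<n. R i \<subseteq> {..<g i}" "(\<Sum>i<n. card (R i)) = m" "\<forall>i<n. m < g i"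
    and loss_d1: "\<forall>s t. ((\<lambda>s. ls s t) has_real_derivative ls' s t) (at s)"
    and loss_d2: "\<forall>s t. ((\<lambda>s. ls' s t) has_real_derivative ls'' s t) (at s)"
    and loss_convex: "\<forall>t. convex_on UNIV (\<lambda>s. ls s t)"
    and lam_pos: "lam > 0"
    and wstar_dim: "wstar \<in> carrier_vec d"
    and wstar_min: "\<forall>w \<in> carrier_vec d. risk ls lam n z y wstar \<le> risk ls lam n z y w"
    and A1: "\<forall>i<n. \<forall>zz \<in> {z i, z' i}. \<forall>w \<in> carrier_vec d.
               vnorm (ls' (scalar_prod w zz) (y i) \<cdot>\<^sub>v zz) \<le> C1"
    and A2: "\<forall>i<n. \<forall>zz \<in> {z i, z' i}. \<forall>w \<in> carrier_vec d.
               \<bar>ls' (scalar_prod w zz) (y i)\<bar> \<le> C2"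
    and A3: "\<forall>i<n. \<forall>s t. \<bar>ls' s (y i) - ls' t (y i)\<bar> \<le> \<gamma>1 * \<bar>s - t\<bar>"
    and A4: "\<forall>i<n. \<forall>s t. \<bar>ls'' s (y i) - ls'' t (y i)\<bar> \<le> \<gamma>2 * \<bar>s - t\<bar>"
  shows "vnorm (risk_grad ls' lam d n z' y
            (wstar + mat_inv d (risk_hess ls'' lam d n z' y wstar)
                       *\<^sub>v (risk_grad ls' lam d n z y wstar - risk_grad ls' lam d n z' y wstar)))
         \<le> 4 * \<gamma>2 * (real m)\<^sup>2 * C1\<^sup>2 * (sqrt (\<Sum>l<L. B ^ (2 * l))) ^ 3 / (lam\<^sup>2 * real n)"
proof (cases "n = 0")
  case True
  have "risk_grad ls' lam d n z' y W = 0\<^sub>v d" for W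
    by (intro eq_vecI) (simp_all add: risk_grad_def True)
  thus ?thesis using True by (simp add: vnorm_def)
next
  case False
  hence n: "n > 0" by simp
  define F where "F = sqrt (\<Sum>l<L. B ^ (2 * l))"
  have zc: "z i \<in> carrier_vec d" for i unfolding z_def d_def by (rule gst_carrier)
  have z'c: "z' i \<in> carrier_vec d" for i unfolding z'_def d_def using gst_carrier by simp
  have z'F: "\<forall>i<n. vnorm (z' i) \<le> F"
  proof (intro allI impI)
    fix i assume i: "i < n"
    have Si: "S i \<in> carrier_mat (g i) (g i)" "transpose_mat (S i) = S i" and xi: "x i \<in> carrier_vec (g i)"
      using graphs i by auto
    have gi: "g i > 0" using removal(3) i by auto
    have xb: "\<forall>a<g i. \<bar>x i $ a\<bar> \<le> 1" using signal_bound i by auto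
    have FR1: "\<forall>v \<in> carrier_vec (g i). (\<Sum>j\<in>{1..J}. (vnorm (mat_fun (h j) (S i) *\<^sub>v v))\<^sup>2) \<le> B\<^sup>2 * (vnorm v)\<^sup>2"
      using frame(3) i by blast
    have FR2: "\<forall>v \<in> carrier_vec (g i). (\<Sum>j\<in>{1..J}. (vnorm (mat_fun (h j) (remove_shift (R i) (S i)) *\<^sub>v v))\<^sup>2) \<le> B\<^sup>2 * (vnorm v)\<^sup>2"
      using frame(3) i by blast
    show "vnorm (z' i) \<le> F"
    proof (cases "R i = {}")
      case True
      thus ?thesis unfolding z'_def F_def using gst_norm_bound[OF Si FR1 xi xb gi] by simp
    next
      case False
      have rs: "remove_shift (R i) (S i) \<in> carrier_mat (g i) (g i)"
        using Si by (simp add: remove_shift_def)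
      have rssym: "transpose_mat (remove_shift (R i) (S i)) = remove_shift (R i) (S i)"
      proof (rule eq_matI)
        fix a b assume ab: "a < dim_row (remove_shift (R i) (S i))" "b < dim_col (remove_shift (R i) (S i))"
        hence "a < g i" "b < g i" using Si by (auto simp: remove_shift_def)
        moreover have "S i $$ (b, a) = S i $$ (a, b)"
          using arg_cong[OF Si(2), of "\<lambda>M. M $$ (a,b)"] Si(1) calculation by simp
        ultimately show "transpose_mat (remove_shift (R i) (S i)) $$ (a, b) = remove_shift (R i) (S i) $$ (a, b)"
          using Si by (auto simp: remove_shift_def)
      qed (use Si in \<open>auto simp: remove_shift_def\<close>)
      have rx: "remove_signal (R i) (x i) \<in> carrier_vec (g i)" using xi by (simp add: remove_signal_def)
      have rxb: "\<forall>a<g i. \<bar>remove_signal (R i) (x i) $ a\<bar> \<le> 1" using xb xi by (simp add: remove_signal_def)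
      show ?thesis unfolding z'_def F_def using False gst_norm_bound[OF rs rssym FR2 rx rxb gi] by simp
    qed
  qed
  have G0: "risk_grad ls' lam d n z y wstar = 0\<^sub>v d"
    by (rule grad_zero[OF loss_d1 _ wstar_dim wstar_min]) (simp add: zc)
  let ?Dl = "risk_grad ls' lam d n z y wstar - risk_grad ls' lam d n z' y wstar"
  have rgc: "risk_grad ls' lam d n Z y W \<in> carrier_vec d" for Z W by (simp add: risk_grad_def)
  have Dlc: "?Dl \<in> carrier_vec d" using rgc by simp
  have G0': "risk_grad ls' lam d n z' y wstar + ?Dl = 0\<^sub>v d"
    by (intro eq_vecI) (use rgc G0 in \<open>simp_all add: risk_grad_def\<close>)
  have C1: "C1 \<ge> 0" using A1 n wstar_dim vnorm_nonneg by (meson insertI1 order_trans)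
  define D where "D i a = ls' (wstar \<bullet> z i) (y i) * z i $ a - ls' (wstar \<bullet> z' i) (y i) * z' i $ a" for i a
  have Dla: "?Dl $ a = (\<Sum>i<n. D i a)" if a: "a < d" for a
    using a by (simp add: risk_grad_def D_def sum_subtractf[symmetric])
  have Di: "L2_set (D i) {..<d} \<le> 2 * C1 * real (card (R i))" if i: "i < n" for i
  proof (cases "R i = {}")
    case True
    hence "D i = (\<lambda>a. 0)" by (auto simp: D_def z'_def z_def)
    thus ?thesis using True by (simp add: L2_set_def)
  next
    case False
    have "finite (R i)" using removal(1) i finite_subset by blast
    hence card: "real (card (R i)) \<ge> 1" using False by (simp add: Suc_le_eq card_gt_0_iff)
    have p: "L2_set (\<lambda>a. ls' (wstar \<bullet> z i) (y i) * z i $ a) {..<d} \<le> C1"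
    proof -
      have "L2_set (\<lambda>a. ls' (wstar \<bullet> z i) (y i) * z i $ a) {..<d} = vnorm (ls' (wstar \<bullet> z i) (y i) \<cdot>\<^sub>v z i)"
        using zc[of i] by (subst vnorm_L2[of _ d]) (auto intro!: L2_set_cong)
      also have "\<dots> \<le> C1" using A1 i wstar_dim by simp
      finally show ?thesis .
    qed
    have q: "L2_set (\<lambda>a. - (ls' (wstar \<bullet> z' i) (y i) * z' i $ a)) {..<d} \<le> C1"
    proof -
      have "L2_set (\<lambda>a. - (ls' (wstar \<bullet> z' i) (y i) * z' i $ a)) {..<d} = vnorm (ls' (wstar \<bullet> z' i) (y i) \<cdot>\<^sub>v z' i)"
        using z'c[of i] by (subst vnorm_L2[of _ d]) (auto intro!: L2_set_cong simp: L2_set_def)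
      also have "\<dots> \<le> C1" using A1 i wstar_dim by simp
      finally show ?thesis .
    qed
    have "L2_set (D i) {..<d} = L2_set (\<lambda>a. ls' (wstar \<bullet> z i) (y i) * z i $ a + - (ls' (wstar \<bullet> z' i) (y i) * z' i $ a)) {..<d}"
      by (rule L2_set_cong) (simp_all add: D_def)
    also have "\<dots> \<le> L2_set (\<lambda>a. ls' (wstar \<bullet> z i) (y i) * z i $ a) {..<d} + L2_set (\<lambda>a. - (ls' (wstar \<bullet> z' i) (y i) * z' i $ a)) {..<d}"
      by (rule L2_set_triangle_ineq)
    also have "\<dots> \<le> 2 * C1" using p q by simp
    also have "\<dots> \<le> 2 * C1 * real (card (R i))"
      using mult_left_mono[OF card, of "2 * C1"] C1 by simp
    finally show ?thesis .
  qed
  have K: "vnorm ?Dl \<le> 2 * real m * C1"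
  proof -
    have "vnorm ?Dl = L2_set (\<lambda>a. \<Sum>i<n. D i a) {..<d}"
      using Dlc by (subst vnorm_L2[of _ d]) (auto intro!: L2_set_cong simp: Dla)
    also have "\<dots> \<le> (\<Sum>i<n. L2_set (D i) {..<d})" by (rule L2_sum_le)
    also have "\<dots> \<le> (\<Sum>i<n. 2 * C1 * real (card (R i)))" by (rule sum_mono) (simp add: Di)
    also have "\<dots> = 2 * C1 * real (\<Sum>i<n. card (R i))" by (simp add: sum_distrib_left)
    also have "\<dots> = 2 * real m * C1" using removal(2) by simp
    finally show ?thesis .
  qed
  have nn: "\<forall>i<n. \<forall>s. ls'' s (y i) \<ge> 0"
  proof (intro allI impI)
    fix i s
    show "ls'' s (y i) \<ge> 0"
      by (rule convex_d2_nonneg[of "\<lambda>s. ls s (y i)" "\<lambda>s. ls' s (y i)" "\<lambda>s. ls'' s (y i)"])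
         (use loss_convex loss_d1 loss_d2 in auto)
  qed
  have "vnorm (risk_grad ls' lam d n z' y (wstar + mat_inv d (risk_hess ls'' lam d n z' y wstar) *\<^sub>v ?Dl))
      \<le> \<gamma>2 * real n * F^3 * (2 * real m * C1 / (real n * lam))^2"
    by (rule newton_bound[OF n lam_pos _ z'F loss_d2 nn A4 wstar_dim Dlc G0' K]) (simp add: z'c)
  also have "\<dots> = 4 * \<gamma>2 * (real m)\<^sup>2 * C1\<^sup>2 * F ^ 3 / (lam\<^sup>2 * real n)"
    using n lam_pos by (simp add: field_simps power2_eq_square)
  finally show ?thesis unfolding F_def .
qed

end
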